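(* There is an absolute constant $c$ such that the following holds. Let $S$ be a finite set of $n\ge 2$ points in the plane and let $\mathcal{F}$ be the family of axis-parallel rectangles. Then the edges of the Delaunay-graph $D(S,\mathcal{F})$ can be colored with at most $c\log n$ colors (i.e., $O(\log n)$ colors) such that every axis-parallel rectangle that contains at least three points of $S$ contains Delaunay-edges of different colors.
   Context: For a finite point set $S$ and a family of regions $\mathcal{F}$, the Delaunay-edges of $S$ with respect to $\mathcal{F}$ are the $2$-element subsets $\{p,q\}\subseteq S$ for which there is $F\in\mathcal{F}$ with $S\cap F=\{p,q\}$; the Delaunay-graph $D(S,\mathcal{F})$ has vertex set $S$ and the Delaunay-edges as edges. A rectangle contains a Delaunay-edge if it contains both endpoints. Axis-parallel rectangles are sets $[a,b]\times[c,d]$. *)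

theory Defs
  imports Complex_Main
begin

definition rect :: "real \<Rightarrow> real \<Rightarrow> real \<Rightarrow> real \<Rightarrow> (real \<times> real) set" where
  "rect a b c d = {a..b} \<times> {c..d}"

definition axis_rects :: "(real \<times> real) set set" where
  "axis_rects = {rect a b c d | a b c d. True}"

definition delaunay_edges :: "'a set \<Rightarrow> 'a set set \<Rightarrow> 'a set set" where
  "delaunay_edges S F = {e. e \<subseteq> S \<and> card e = 2 \<and> (\<exists>R\<in>F. S \<inter> R = e)}"

end

theory Submission
  imports Defs
begin

definition bbox :: "real \<times> real \<Rightarrow> real \<times> real \<Rightarrow> (real \<times> real) set" where
  "bbox p q = rect (min (fst p) (fst q)) (max (fst p) (fst q)) (min (snd p) (snd q)) (max (snd p) (snd q))"

lemma bbox_mem: "r \<in> bbox p q \<longleftrightarrow> min (fst p) (fst q) \<le> fst r \<and> fst r \<le> max (fst p) (fst q)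
   \<and> min (snd p) (snd q) \<le> snd r \<and> snd r \<le> max (snd p) (snd q)"
  by (cases r) (auto simp: bbox_def rect_def)

lemma bbox_ends: "p \<in> bbox p q" "q \<in> bbox p q"
  by (auto simp: bbox_mem)

lemma bbox_sub1: "r \<in> bbox p q \<Longrightarrow> bbox p r \<subseteq> bbox p q"
  by (auto simp: bbox_mem)

lemma bbox_sub2: "r \<in> bbox p q \<Longrightarrow> bbox r q \<subseteq> bbox p q"
  by (auto simp: bbox_mem)

lemma bbox_corner1: "r \<in> bbox p q \<Longrightarrow> q \<in> bbox p r \<Longrightarrow> q = r"
  unfolding bbox_mem by (cases p; cases q; cases r) (simp add: min_def max_def split: if_splits)

lemma bbox_corner2: "r \<in> bbox p q \<Longrightarrow> p \<in> bbox r q \<Longrightarrow> p = r"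
  unfolding bbox_mem by (cases p; cases q; cases r) (simp add: min_def max_def split: if_splits)

lemma bbox_rect: assumes "p \<in> rect a b c d" "q \<in> rect a b c d" shows "bbox p q \<subseteq> rect a b c d"
proof
  fix r assume "r \<in> bbox p q"
  with assms show "r \<in> rect a b c d" unfolding bbox_def
    by (cases p; cases q; cases r) (simp add: rect_def min_def max_def split: if_splits)
qed

lemma del_edge: "p \<noteq> q \<Longrightarrow> S \<inter> bbox p q = {p,q} \<Longrightarrow> {p,q} \<in> delaunay_edges S axis_rects"
proof -
  assume a: "p \<noteq> q" "S \<inter> bbox p q = {p,q}"
  have "bbox p q \<in> axis_rects" unfolding axis_rects_def bbox_def by blast
  moreover have "{p,q} \<subseteq> S" using a(2) by blast
  moreover have "card {p,q} = 2" using a(1) by simp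
  ultimately show ?thesis unfolding delaunay_edges_def using a(2) by blast
qed

lemma min_pair:
  assumes fin: "finite S" and ne: "(p0,q0) \<in> T"
    and T: "\<And>p q. (p,q)\<in>T \<Longrightarrow> p \<in> S \<and> q \<in> S \<and> p \<noteq> q"
    and cl: "\<And>p q r. (p,q)\<in>T \<Longrightarrow> r \<in> S \<Longrightarrow> r \<in> bbox p q \<Longrightarrow> r \<noteq> p \<Longrightarrow> r \<noteq> q \<Longrightarrow> (p,r)\<in>T \<or> (r,q)\<in>T"
  shows "\<exists>p q. (p,q)\<in>T \<and> S \<inter> bbox p q = {p,q}"
proof -
  obtain pq where pq: "pq \<in> T" and mn: "\<And>y. y\<in>T \<Longrightarrow> card (S \<inter> bbox (fst pq) (snd pq)) \<le> card (S \<inter> bbox (fst y) (snd y))"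
    using ex_has_least_nat[of "\<lambda>x. x\<in>T" "(p0,q0)" "\<lambda>y. card (S \<inter> bbox (fst y) (snd y))"] ne by metis
  obtain p q where pqd: "pq = (p,q)" by (cases pq)
  have pqT: "(p,q) \<in> T" using pq pqd by simp
  have "S \<inter> bbox p q = {p,q}"
  proof (rule ccontr)
    assume a: "S \<inter> bbox p q \<noteq> {p,q}"
    have "{p,q} \<subseteq> S \<inter> bbox p q" using T[OF pqT] bbox_ends(1)[where p=p and q=q] bbox_ends(2)[where p=p and q=q] by blast
    then obtain r where r: "r\<in>S" "r\<in>bbox p q" "r\<noteq>p" "r\<noteq>q" using a by blast
    from cl[OF pqT r] show False
    proof
      assume pr: "(p,r)\<in>T"
      have "S \<inter> bbox p r \<subset> S \<inter> bbox p q"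
      proof
        show "S \<inter> bbox p r \<subseteq> S \<inter> bbox p q" using bbox_sub1[OF r(2)] by blast
        have "q \<notin> bbox p r" using bbox_corner1[OF r(2)] r(4) by blast
        moreover have "q \<in> S \<inter> bbox p q" using T[OF pqT] bbox_ends(1)[where p=p and q=q] bbox_ends(2)[where p=p and q=q] by blast
        ultimately show "S \<inter> bbox p r \<noteq> S \<inter> bbox p q" by blast
      qed
      hence "card (S \<inter> bbox p r) < card (S \<inter> bbox p q)" using fin by (meson finite_Int psubset_card_mono)
      with mn[OF pr] pqd show False by simp
    next
      assume pr: "(r,q)\<in>T"
      have "S \<inter> bbox r q \<subset> S \<inter> bbox p q"
      proof
        show "S \<inter> bbox r q \<subseteq> S \<inter> bbox p q" using bbox_sub2[OF r(2)] by blast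
        have "p \<notin> bbox r q" using bbox_corner2[OF r(2)] r(3) by blast
        moreover have "p \<in> S \<inter> bbox p q" using T[OF pqT] bbox_ends(1)[where p=p and q=q] bbox_ends(2)[where p=p and q=q] by blast
        ultimately show "S \<inter> bbox r q \<noteq> S \<inter> bbox p q" by blast
      qed
      hence "card (S \<inter> bbox r q) < card (S \<inter> bbox p q)" using fin by (meson finite_Int psubset_card_mono)
      with mn[OF pr] pqd show False by simp
    qed
  qed
  with pqT show ?thesis by blast
qed

definition lev :: "nat \<Rightarrow> nat \<Rightarrow> nat" where
  "lev i j = (LEAST k. i div 2^k = j div 2^k)"

lemma lev_eq: "i div 2^(lev i j) = j div 2^(lev i j)"
proof -
  have "i div 2^(i+j) = j div 2^(i+j)"
  proof -
    have "i < 2^(i+j)" "j < 2^(i+j)"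
      using less_exp[of "i+j"] by linarith+
    thus ?thesis by simp
  qed
  thus ?thesis unfolding lev_def by (rule LeastI)
qed

lemma lev_le: "i div 2^k = j div 2^k \<Longrightarrow> lev i j \<le> k"
  unfolding lev_def by (rule Least_le)

lemma div_up: "l \<le> k \<Longrightarrow> i div 2^l = j div 2^l \<Longrightarrow> i div 2^k = j div (2::nat)^k"
proof -
  assume "l \<le> k" "i div 2^l = j div 2^l"
  moreover have "(2::nat)^k = 2^l * 2^(k-l)" using \<open>l \<le> k\<close> by (simp add: power_add[symmetric])
  ultimately show ?thesis by (simp add: div_mult2_eq)
qed

lemma lev_up: "lev i j \<le> k \<Longrightarrow> i div 2^k = j div 2^k"
  using div_up lev_eq by blast

lemma lev_sym: "lev i j = lev j i"
  unfolding lev_def by (simp add: eq_commute)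

lemma lev_0: "lev i j = 0 \<longleftrightarrow> i = j"
proof
  assume "lev i j = 0" thus "i = j" using lev_eq[of i j] by simp
next
  assume "i = j" thus "lev i j = 0" using lev_le[of i 0 j] by simp
qed

lemma lev_ultra: "lev i k \<le> max (lev i j) (lev j k)"
  using lev_up[of i j "max (lev i j) (lev j k)"] lev_up[of j k "max (lev i j) (lev j k)"]
  by (intro lev_le) simp

lemma lev_between: assumes "i \<le> k" "k \<le> j" shows "lev i k \<le> lev i j" "lev k j \<le> lev i j"
proof -
  let ?l = "lev i j"
  have e: "i div 2^?l = j div 2^?l" by (rule lev_eq)
  have "i div 2^?l \<le> k div 2^?l" "k div 2^?l \<le> j div 2^?l" using assms div_le_mono by blast+
  hence "i div 2^?l = k div 2^?l" "k div 2^?l = j div 2^?l" using e by linarith+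
  thus "lev i k \<le> lev i j" "lev k j \<le> lev i j" using lev_le by blast+
qed

lemma t3: "(a::nat) div 2 = b div 2 \<Longrightarrow> b div 2 = c div 2 \<Longrightarrow> a\<noteq>b \<Longrightarrow> b\<noteq>c \<Longrightarrow> a\<noteq>c \<Longrightarrow> False"
  by presburger

lemma lev_three:
  assumes "lev i j = L" "lev j k = L" "lev i k = L" "L > 0"
  shows False
proof -
  have d: "\<And>a b. lev a b = L \<Longrightarrow> a div 2^(L-1) \<noteq> b div 2^(L-1)"
    using lev_le \<open>L>0\<close> by fastforce
  have e: "\<And>a b. lev a b = L \<Longrightarrow> a div 2^(L-1) div 2 = b div 2^(L-1) div 2"
  proof -
    fix a b assume "lev a b = L"
    hence "a div 2^L = b div 2^L" using lev_up by blast
    moreover have "(2::nat)^L = 2^(L-1) * 2" using \<open>L>0\<close> by (metis Suc_diff_1 power_Suc2)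
    ultimately show "a div 2^(L-1) div 2 = b div 2^(L-1) div 2" by (simp add: div_mult2_eq)
  qed
  define x y z where "x = i div 2^(L-1)" "y = j div 2^(L-1)" "z = k div 2^(L-1)"
  have "x \<noteq> y" "y \<noteq> z" "x \<noteq> z" "x div 2 = y div 2" "y div 2 = z div 2"
    using d[OF assms(1)] d[OF assms(2)] d[OF assms(3)] e[OF assms(1)] e[OF assms(2)]
    unfolding x_y_z_def by auto
  thus False using t3 by blast
qed

definition rk :: "(real \<times> real \<Rightarrow> real) \<Rightarrow> (real \<times> real) set \<Rightarrow> real \<times> real \<Rightarrow> nat" where
  "rk f S p = card {v \<in> f ` S. v < f p}"

lemma rk_mono: "finite S \<Longrightarrow> f p \<le> f q \<Longrightarrow> rk f S p \<le> rk f S q"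
  unfolding rk_def by (rule card_mono) auto

lemma rk_strict: assumes "finite S" "p \<in> S" "f p < f q" shows "rk f S p < rk f S q"
  unfolding rk_def
proof (rule psubset_card_mono)
  show "finite {v \<in> f ` S. v < f q}" using assms by simp
  have "f p \<in> {v \<in> f ` S. v < f q}" using assms by auto
  moreover have "f p \<notin> {v \<in> f ` S. v < f p}" by simp
  moreover have "{v \<in> f ` S. v < f p} \<subseteq> {v \<in> f ` S. v < f q}" using assms(3) by auto
  ultimately show "{v \<in> f ` S. v < f p} \<subset> {v \<in> f ` S. v < f q}" by blast
qed

lemma rk_less: assumes "finite S" "p \<in> S" shows "rk f S p < card S"
proof -
  have "rk f S p < card (f ` S)" unfolding rk_def
  proof (rule psubset_card_mono)
    show "finite (f ` S)" using assms by simp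
    have "f p \<in> f ` S" using assms by auto
    thus "{v \<in> f ` S. v < f p} \<subset> f ` S" by auto
  qed
  also have "\<dots> \<le> card S" using assms(1) by (rule card_image_le)
  finally show ?thesis .
qed

lemma rk_neq: assumes "finite S" "p \<in> S" "q \<in> S" "f p \<noteq> f q" shows "rk f S p \<noteq> rk f S q"
  using rk_strict[OF assms(1,2), of f q] rk_strict[OF assms(1,3), of f p] assms(4) by linarith

lemma rk_between: assumes "finite S" "min (f p) (f q) \<le> f r \<and> f r \<le> max (f p) (f q)"
  shows "min (rk f S p) (rk f S q) \<le> rk f S r \<and> rk f S r \<le> max (rk f S p) (rk f S q)"
proof (cases "f p \<le> f q")
  case True
  hence "f p \<le> f r" "f r \<le> f q" using assms(2) by auto
  hence "rk f S p \<le> rk f S r" "rk f S r \<le> rk f S q" using rk_mono[OF assms(1)] by blast+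
  thus ?thesis by linarith
next
  case False
  hence "f q \<le> f r" "f r \<le> f p" using assms(2) by auto
  hence "rk f S q \<le> rk f S r" "rk f S r \<le> rk f S p" using rk_mono[OF assms(1)] by blast+
  thus ?thesis by linarith
qed

lemma generic:
  fixes f :: "real \<times> real \<Rightarrow> real" and S :: "(real \<times> real) set"
  assumes fin: "finite S" and R: "R = rect a b c d" and P3: "3 \<le> card (S \<inter> R)"
   and hf: "\<And>p q r. r \<in> bbox p q \<Longrightarrow> min (f p) (f q) \<le> f r \<and> f r \<le> max (f p) (f q)"
   and dif: "p0 \<in> S \<inter> R" "q0 \<in> S \<inter> R" "f p0 \<noteq> f q0"
  shows "\<exists>p1 q1 p2 q2. p1 \<in> S \<inter> R \<and> q1 \<in> S \<inter> R \<and> p2 \<in> S \<inter> R \<and> q2 \<in> S \<inter> R \<and> p1 \<noteq> q1 \<and> p2 \<noteq> q2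
     \<and> S \<inter> bbox p1 q1 = {p1,q1} \<and> S \<inter> bbox p2 q2 = {p2,q2}
     \<and> lev (rk f S p2) (rk f S q2) < lev (rk f S p1) (rk f S q1)"
proof -
  define P where "P = S \<inter> R"
  define h where "h = rk f S"
  define g where "g = (\<lambda>pq. lev (h (fst pq)) (h (snd pq)))"
  define L where "L = Max (g ` (P \<times> P))"
  have finP: "finite (P \<times> P)" using fin P_def by simp
  have gle: "\<And>p q. p \<in> P \<Longrightarrow> q \<in> P \<Longrightarrow> lev (h p) (h q) \<le> L"
  proof -
    fix p q assume "p \<in> P" "q \<in> P"
    hence "(p,q) \<in> P \<times> P" by (rule SigmaI)
    hence "g (p,q) \<in> g ` (P \<times> P)" by (rule imageI)
    hence "g (p,q) \<le> L" unfolding L_def by (rule Max_ge[OF finite_imageI[OF finP]])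
    thus "lev (h p) (h q) \<le> L" unfolding g_def by simp
  qed
  have "h p0 \<noteq> h q0" unfolding h_def using rk_neq[OF fin dif(1)[THEN IntD1] dif(2)[THEN IntD1] dif(3)] .
  hence "lev (h p0) (h q0) \<noteq> 0" using lev_0 by blast
  moreover have "p0 \<in> P" "q0 \<in> P" using dif P_def by simp_all
  hence "lev (h p0) (h q0) \<le> L" by (rule gle)
  ultimately have Lpos: "0 < L" by linarith
  have bR: "\<And>p q. p \<in> P \<Longrightarrow> q \<in> P \<Longrightarrow> S \<inter> bbox p q \<subseteq> P"
  proof -
    fix p q assume "p \<in> P" "q \<in> P"
    hence "bbox p q \<subseteq> R" unfolding P_def R using bbox_rect by simp
    thus "S \<inter> bbox p q \<subseteq> P" unfolding P_def by blast
  qed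
  have rkb: "\<And>p q r. r \<in> bbox p q \<Longrightarrow> min (h p) (h q) \<le> h r \<and> h r \<le> max (h p) (h q)"
  proof -
    fix p q r assume "r \<in> bbox p q"
    from rk_between[OF fin hf[OF this]]
    show "min (h p) (h q) \<le> h r \<and> h r \<le> max (h p) (h q)" unfolding h_def .
  qed
  have "L \<in> g ` (P \<times> P)" unfolding L_def using finP dif P_def by (intro Max_in) auto
  then obtain p3 q3 where pq3: "p3 \<in> P" "q3 \<in> P" "lev (h p3) (h q3) = L" unfolding g_def by auto
  define T1 where "T1 = {(p,q). p \<in> P \<and> q \<in> P \<and> lev (h p) (h q) = L}"
  have "\<exists>p q. (p,q) \<in> T1 \<and> S \<inter> bbox p q = {p,q}"
  proof (rule min_pair[OF fin])
    show "(p3,q3) \<in> T1" using pq3 T1_def by simp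
    fix p q assume pq: "(p,q) \<in> T1"
    hence "p \<in> P" "q \<in> P" "lev (h p) (h q) = L" unfolding T1_def by auto
    moreover have "p \<noteq> q"
    proof
      assume "p = q" hence "lev (h p) (h q) = 0" using lev_0 by simp
      thus False using \<open>lev (h p) (h q) = L\<close> Lpos by simp
    qed
    ultimately show "p \<in> S \<and> q \<in> S \<and> p \<noteq> q" unfolding P_def by blast
    fix r assume r: "r \<in> S" "r \<in> bbox p q" "r \<noteq> p" "r \<noteq> q"
    have rP: "r \<in> P" using bR[OF \<open>p \<in> P\<close> \<open>q \<in> P\<close>] r by blast
    have "lev (h p) (h q) \<le> max (lev (h p) (h r)) (lev (h r) (h q))" by (rule lev_ultra)
    moreover have "lev (h p) (h r) \<le> L" "lev (h r) (h q) \<le> L" using gle[OF \<open>p \<in> P\<close> rP] gle[OF rP \<open>q \<in> P\<close>] by simp_all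
    ultimately have "lev (h p) (h r) = L \<or> lev (h r) (h q) = L" using \<open>lev (h p) (h q) = L\<close> by linarith
    thus "(p,r) \<in> T1 \<or> (r,q) \<in> T1" unfolding T1_def using rP \<open>p \<in> P\<close> \<open>q \<in> P\<close> by auto
  qed
  then obtain p1 q1 where pq1: "(p1,q1) \<in> T1" "S \<inter> bbox p1 q1 = {p1,q1}" by blast
  have "3 \<le> card P" using P3 P_def by simp
  then obtain X where X: "X \<subseteq> P" "card X = 3" by (rule obtain_subset_with_card_n)
  from X(2) obtain x y z where xyz: "X = {x,y,z}" "x \<noteq> y" "y \<noteq> z" "x \<noteq> z" unfolding card_3_iff by blast
  have xyzP: "x \<in> P" "y \<in> P" "z \<in> P" using X(1) unfolding xyz(1) by blast+
  define T2 where "T2 = {(p,q). p \<in> P \<and> q \<in> P \<and> p \<noteq> q \<and> lev (h p) (h q) < L}"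
  have ex2: "\<exists>u v. (u,v) \<in> T2"
  proof (rule ccontr)
    assume "\<not> ?thesis"
    hence n: "\<And>u v. (u,v) \<notin> T2" by blast
    have "\<not> lev (h x) (h y) < L" "\<not> lev (h y) (h z) < L" "\<not> lev (h x) (h z) < L"
      using n[of x y] n[of y z] n[of x z] xyz(2-4) xyzP unfolding T2_def by simp_all
    moreover have "lev (h x) (h y) \<le> L" "lev (h y) (h z) \<le> L" "lev (h x) (h z) \<le> L"
      using gle[OF xyzP(1) xyzP(2)] gle[OF xyzP(2) xyzP(3)] gle[OF xyzP(1) xyzP(3)] by simp_all
    ultimately have "lev (h x) (h y) = L" "lev (h y) (h z) = L" "lev (h x) (h z) = L" by linarith+
    thus False using lev_three[OF _ _ _ Lpos] by blast
  qed
  then obtain u v where uv: "(u,v) \<in> T2" by blast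
  have "\<exists>p q. (p,q) \<in> T2 \<and> S \<inter> bbox p q = {p,q}"
  proof (rule min_pair[OF fin uv])
    fix p q assume pq: "(p,q) \<in> T2"
    hence pqP: "p \<in> P" "q \<in> P" "p \<noteq> q" "lev (h p) (h q) < L" unfolding T2_def by auto
    thus "p \<in> S \<and> q \<in> S \<and> p \<noteq> q" unfolding P_def by blast
    fix r assume r: "r \<in> S" "r \<in> bbox p q" "r \<noteq> p" "r \<noteq> q"
    have rP: "r \<in> P" using bR[OF pqP(1,2)] r by blast
    have "lev (h p) (h r) \<le> lev (h p) (h q)"
    proof (cases "h p \<le> h q")
      case True
      thus ?thesis using rkb[OF r(2)] lev_between(1)[of "h p" "h r" "h q"] by simp
    next
      case False
      hence "h q \<le> h r" "h r \<le> h p" using rkb[OF r(2)] by auto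
      thus ?thesis using lev_between(2)[of "h q" "h r" "h p"] lev_sym[of "h p" "h r"] lev_sym[of "h p" "h q"] by simp
    qed
    thus "(p,r) \<in> T2 \<or> (r,q) \<in> T2" unfolding T2_def using rP pqP r(3) by auto
  qed
  then obtain p2 q2 where pq2: "(p2,q2) \<in> T2" "S \<inter> bbox p2 q2 = {p2,q2}" by blast
  have a1: "p1 \<in> P" "q1 \<in> P" "lev (h p1) (h q1) = L" using pq1(1) unfolding T1_def by auto
  have a2: "p2 \<in> P" "q2 \<in> P" "p2 \<noteq> q2" "lev (h p2) (h q2) < L" using pq2(1) unfolding T2_def by auto
  have "p1 \<noteq> q1"
  proof
    assume "p1 = q1" hence "lev (h p1) (h q1) = 0" using lev_0 by simp
    thus False using a1(3) Lpos by simp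
  qed
  show ?thesis
  proof (intro exI conjI)
    show "p1 \<in> S \<inter> R" "q1 \<in> S \<inter> R" "p2 \<in> S \<inter> R" "q2 \<in> S \<inter> R"
      using a1 a2 P_def by simp_all
    show "p1 \<noteq> q1" "p2 \<noteq> q2" by fact+
    show "S \<inter> bbox p1 q1 = {p1,q1}" "S \<inter> bbox p2 q2 = {p2,q2}" by fact+
    show "lev (rk f S p2) (rk f S q2) < lev (rk f S p1) (rk f S q1)"
      using a1(3) a2(4) unfolding h_def by simp
  qed
qed

definition cp :: "(real \<times> real) set \<Rightarrow> real \<times> real \<Rightarrow> real \<times> real \<Rightarrow> nat" where
  "cp S p q = (if fst p \<noteq> fst q then 2 * lev (rk fst S p) (rk fst S q)
               else 2 * lev (rk snd S p) (rk snd S q) + 1)"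

definition col :: "(real \<times> real) set \<Rightarrow> (real \<times> real) set \<Rightarrow> nat" where
  "col S e = cp S (SOME p. p \<in> e) (SOME q. q \<in> e \<and> q \<noteq> (SOME p. p \<in> e))"

lemma cp_sym: "cp S p q = cp S q p"
  unfolding cp_def using lev_sym by metis

lemma col_pair: assumes "p \<noteq> q" shows "col S {p,q} = cp S p q"
proof -
  define p0 where "p0 = (SOME p'. p' \<in> {p,q})"
  have p0: "p0 \<in> {p,q}" unfolding p0_def by (rule someI[of _ p]) simp
  define q0 where "q0 = (SOME q'. q' \<in> {p,q} \<and> q' \<noteq> p0)"
  have "\<exists>q'. q' \<in> {p,q} \<and> q' \<noteq> p0" using p0 assms by blast
  hence q0: "q0 \<in> {p,q} \<and> q0 \<noteq> p0" unfolding q0_def by (rule someI_ex)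
  have "col S {p,q} = cp S p0 q0" unfolding col_def p0_def q0_def by simp
  moreover have "(p0 = p \<and> q0 = q) \<or> (p0 = q \<and> q0 = p)" using p0 q0 by blast
  ultimately show ?thesis using cp_sym by metis
qed

lemma lev_bound: assumes "i < 2^K" "j < 2^K" shows "lev i j \<le> K"
  using assms by (intro lev_le) simp

theorem corollary2:
  shows "\<exists>c::real. \<forall>S :: (real \<times> real) set. finite S \<and> card S \<ge> 2 \<longrightarrow>
     (\<exists>col :: (real \<times> real) set \<Rightarrow> nat.
        real (card (col ` delaunay_edges S axis_rects)) \<le> c * ln (real (card S)) \<and>
        (\<forall>R\<in>axis_rects. card (S \<inter> R) \<ge> 3 \<longrightarrow>
           (\<exists>e1\<in>delaunay_edges S axis_rects. \<exists>e2\<in>delaunay_edges S axis_rects.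
               e1 \<subseteq> R \<and> e2 \<subseteq> R \<and> col e1 \<noteq> col e2)))"
proof (rule exI[of _ "6 / ln 2"], intro allI impI)
  fix S :: "(real \<times> real) set"
  assume asm: "finite S \<and> card S \<ge> 2"
  hence fin: "finite S" and n2: "card S \<ge> 2" by auto
  define n where "n = card S"
  define K where "K = (LEAST K. n \<le> 2^K)"
  have "n \<le> 2^n" using less_exp[of n] by linarith
  hence K: "n \<le> 2^K" unfolding K_def by (rule LeastI)
  have "K \<noteq> 0" using K n2 n_def by (cases K) auto
  have "\<not> n \<le> 2^(K-1)" unfolding K_def
    by (rule not_less_Least) (use \<open>K \<noteq> 0\<close> K_def in simp)
  hence Kl: "2^(K-1) < n" by simp
  let ?E = "delaunay_edges S axis_rects"
  have colb: "col S ` ?E \<subseteq> {..2*K+1}"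
  proof
    fix c assume "c \<in> col S ` ?E"
    then obtain e where e: "e \<in> ?E" "c = col S e" by blast
    hence "e \<subseteq> S" "card e = 2" unfolding delaunay_edges_def by auto
    then obtain p q where pq: "e = {p,q}" "p \<noteq> q" using card_2_iff by metis
    have pS: "p \<in> S" "q \<in> S" using pq \<open>e \<subseteq> S\<close> by auto
    have "\<And>f. lev (rk f S p) (rk f S q) \<le> K"
    proof -
      fix f
      have "rk f S p < 2^K" "rk f S q < 2^K"
        using rk_less[OF fin pS(1), of f] rk_less[OF fin pS(2), of f] K n_def by linarith+
      thus "lev (rk f S p) (rk f S q) \<le> K" by (rule lev_bound)
    qed
    hence "cp S p q \<le> 2*K+1" unfolding cp_def by (simp add: le_SucI)
    thus "c \<in> {..2*K+1}" using e pq col_pair by simp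
  qed
  have "card (col S ` ?E) \<le> card {..2*K+1}" using colb by (rule card_mono[rotated]) simp
  hence cardb: "real (card (col S ` ?E)) \<le> 2 * real K + 2" by simp
  have ln2: "0 < ln (2::real)" by simp
  have "ln (real (2^(K-1))) < ln (real n)" using Kl by (subst ln_less_cancel_iff) auto
  hence "real (K-1) * ln 2 < ln (real n)" by (simp add: ln_realpow)
  hence a1: "(real K - 1) * ln 2 < ln (real n)" using \<open>K \<noteq> 0\<close> by (simp add: of_nat_diff)
  have a2: "ln 2 \<le> ln (real n)" using n2 n_def by simp
  have "(2 * real K + 2) * ln 2 \<le> 6 * ln (real n)" using a1 a2 by (simp add: algebra_simps)
  hence "2 * real K + 2 \<le> 6 / ln 2 * ln (real n)" using ln2 by (simp add: field_simps)
  with cardb have part1: "real (card (col S ` ?E)) \<le> 6 / ln 2 * ln (real (card S))" unfolding n_def by linarith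
  have part2: "\<forall>R\<in>axis_rects. card (S \<inter> R) \<ge> 3 \<longrightarrow>
           (\<exists>e1\<in>?E. \<exists>e2\<in>?E. e1 \<subseteq> R \<and> e2 \<subseteq> R \<and> col S e1 \<noteq> col S e2)"
  proof (intro ballI impI)
    fix R assume "R \<in> axis_rects" and R3: "card (S \<inter> R) \<ge> 3"
    then obtain a b c d where R: "R = rect a b c d" unfolding axis_rects_def by blast
    have mk: "\<And>p q. p \<noteq> q \<Longrightarrow> p \<in> S \<inter> R \<Longrightarrow> q \<in> S \<inter> R \<Longrightarrow> S \<inter> bbox p q = {p,q} \<Longrightarrow> {p,q} \<in> ?E \<and> {p,q} \<subseteq> R"
      using del_edge by blast
    show "\<exists>e1\<in>?E. \<exists>e2\<in>?E. e1 \<subseteq> R \<and> e2 \<subseteq> R \<and> col S e1 \<noteq> col S e2"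
    proof (cases "\<exists>p0\<in>S \<inter> R. \<exists>q0\<in>S \<inter> R. fst p0 \<noteq> fst q0")
      case True
      then obtain p0 q0 where d: "p0 \<in> S \<inter> R" "q0 \<in> S \<inter> R" "fst p0 \<noteq> fst q0" by blast
      have hf: "\<And>p q r. r \<in> bbox p q \<Longrightarrow> min (fst p) (fst q) \<le> fst r \<and> fst r \<le> max (fst p) (fst q)"
        unfolding bbox_mem by blast
      obtain p1 q1 p2 q2 where g: "p1 \<in> S \<inter> R" "q1 \<in> S \<inter> R" "p2 \<in> S \<inter> R" "q2 \<in> S \<inter> R" "p1 \<noteq> q1" "p2 \<noteq> q2"
        "S \<inter> bbox p1 q1 = {p1,q1}" "S \<inter> bbox p2 q2 = {p2,q2}"
        "lev (rk fst S p2) (rk fst S q2) < lev (rk fst S p1) (rk fst S q1)"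
        using generic[OF fin R R3 hf d] by blast
      have "rk fst S p1 \<noteq> rk fst S q1" using g(9) lev_0 by (metis less_nat_zero_code)
      hence "fst p1 \<noteq> fst q1" unfolding rk_def by metis
      hence c1: "cp S p1 q1 = 2 * lev (rk fst S p1) (rk fst S q1)" unfolding cp_def by simp
      have "cp S p2 q2 \<noteq> cp S p1 q1"
      proof (cases "fst p2 \<noteq> fst q2")
        case True thus ?thesis using c1 g(9) unfolding cp_def by simp
      next
        case False
        hence "cp S p2 q2 = 2 * lev (rk snd S p2) (rk snd S q2) + 1" unfolding cp_def by simp
        thus ?thesis using c1 by presburger
      qed
      thus ?thesis using mk[OF g(5,1,2,7)] mk[OF g(6,3,4,8)] col_pair[OF g(5)] col_pair[OF g(6)] by metis
    next
      case False
      hence sf: "\<And>p q. p \<in> S \<inter> R \<Longrightarrow> q \<in> S \<inter> R \<Longrightarrow> fst p = fst q" by blast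
      obtain X where X: "X \<subseteq> S \<inter> R" "card X = 3" using R3 by (rule obtain_subset_with_card_n)
      from X(2) obtain x y z where xyz: "X = {x,y,z}" "x \<noteq> y" "y \<noteq> z" "x \<noteq> z" unfolding card_3_iff by blast
      have xy: "x \<in> S \<inter> R" "y \<in> S \<inter> R" using X(1) unfolding xyz(1) by blast+
      have "snd x \<noteq> snd y" using sf[OF xy] xyz(2) prod_eq_iff by metis
      have hf: "\<And>p q r. r \<in> bbox p q \<Longrightarrow> min (snd p) (snd q) \<le> snd r \<and> snd r \<le> max (snd p) (snd q)"
        unfolding bbox_mem by blast
      obtain p1 q1 p2 q2 where g: "p1 \<in> S \<inter> R" "q1 \<in> S \<inter> R" "p2 \<in> S \<inter> R" "q2 \<in> S \<inter> R" "p1 \<noteq> q1" "p2 \<noteq> q2"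
        "S \<inter> bbox p1 q1 = {p1,q1}" "S \<inter> bbox p2 q2 = {p2,q2}"
        "lev (rk snd S p2) (rk snd S q2) < lev (rk snd S p1) (rk snd S q1)"
        using generic[OF fin R R3 hf xy \<open>snd x \<noteq> snd y\<close>] by blast
      have "cp S p2 q2 \<noteq> cp S p1 q1" using sf[OF g(1,2)] sf[OF g(3,4)] g(9) unfolding cp_def by simp
      thus ?thesis using mk[OF g(5,1,2,7)] mk[OF g(6,3,4,8)] col_pair[OF g(5)] col_pair[OF g(6)] by metis
    qed
  qed
  show "\<exists>col :: (real \<times> real) set \<Rightarrow> nat.
        real (card (col ` ?E)) \<le> 6 / ln 2 * ln (real (card S)) \<and>
        (\<forall>R\<in>axis_rects. card (S \<inter> R) \<ge> 3 \<longrightarrow>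
           (\<exists>e1\<in>?E. \<exists>e2\<in>?E. e1 \<subseteq> R \<and> e2 \<subseteq> R \<and> col e1 \<noteq> col e2))"
    using part1 part2 by blast
qed

end
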